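(* Let $m\ge2$ and let $G$ be the group of type $D_1$. Then the distinct non-identity normal subgroups of $G$ are exactly: (i) $\langle t^{2^{\alpha}},x\rangle$, $\langle t^{2^{\alpha}},y\rangle$, $\langle t^{2^{\alpha}},xy\rangle$, $\langle t^{2^{\alpha}},x,y\rangle$ for $0\le\alpha\le m-1$; (ii) $\langle t^{2^{\beta}}x\rangle$, $\langle t^{2^{\beta}}y\rangle$, $\langle t^{2^{m-1}},t^{2^{\beta}}xy\rangle$, $\langle t^{2^{m-1}},x,t^{2^{\beta}}y\rangle$, $\langle t^{2^{m-1}},t^{2^{\beta}}x,y\rangle$, $\langle t^{2^{\beta}}x,t^{2^{\beta}}y\rangle$ for $0\le\beta\le m-2$; (iii) $\langle t^{2^{\gamma}}\rangle$ for $0\le\gamma\le m-1$.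
   Context: The group of type $D_1$ (with parameter $m\ge1$) is $G=\langle x,y,t\mid x^2=y^2=t^{2^m}=1,\ y^{-1}x^{-1}yx\,t^{2^{m-1}}=1,\ t \text{ central}\rangle$, of order $2^{m+2}$. *)

theory Defs
  imports "HOL-Algebra.Coset" "HOL-Algebra.Generated_Groups"
begin

definition D1_normal_list :: "('a, 'b) monoid_scheme \<Rightarrow> nat \<Rightarrow> 'a \<Rightarrow> 'a \<Rightarrow> 'a \<Rightarrow> 'a set list" where
  "D1_normal_list G m x y t =
    (let T = (\<lambda>k::nat. t [^]\<^bsub>G\<^esub> ((2::nat) ^ k));
         z = T (m - 1);
         mul = (\<lambda>a b. a \<otimes>\<^bsub>G\<^esub> b);
         gen = generate G
     in concat (map (\<lambda>a. [gen {T a, x}, gen {T a, y}, gen {T a, mul x y}, gen {T a, x, y}]) [0..<m])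
        @ concat (map (\<lambda>b. [gen {mul (T b) x}, gen {mul (T b) y},
                             gen {z, mul (mul (T b) x) y},
                             gen {z, x, mul (T b) y},
                             gen {z, mul (T b) x, y},
                             gen {mul (T b) x, mul (T b) y}]) [0..<m - 1])
        @ map (\<lambda>c. gen {T c}) [0..<m])"

end

theory Submission
  imports Defs "HOL-Computational_Algebra.Primes"
begin


definition inP :: "nat \<Rightarrow> bool \<Rightarrow> bool \<Rightarrow> bool" where
  "inP c a b = (if c = 0 then \<not> a \<and> \<not> b else if c = 1 \<or> c = 5 then \<not> b
     else if c = 2 \<or> c = 6 then \<not> a else if c = 3 \<or> c = 7 then a = b else True)"

definition tw :: "nat \<Rightarrow> bool \<Rightarrow> bool \<Rightarrow> bool" where
  "tw c a b = (if c = 5 \<or> c = 7 \<or> c = 9 then a else if c = 6 \<or> c = 8 then b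
     else if c = 10 then a \<noteq> b else False)"

definition mem :: "nat \<Rightarrow> nat \<Rightarrow> int \<Rightarrow> bool \<Rightarrow> bool \<Rightarrow> bool" where
  "mem c e i a b = (inP c a b \<and> (2::int) ^ e dvd (i + (if tw c a b then 2 ^ (e - 1) else 0)))"

lemma mem_shift: "(2::int) ^ e dvd k \<Longrightarrow> mem c e (i + k) a b = mem c e i a b"
proof -
  assume k: "(2::int) ^ e dvd k"
  have e: "i + k + (if tw c a b then 2 ^ (e - 1) else 0) = (i + (if tw c a b then 2 ^ (e - 1) else 0)) + k" by simp
  show ?thesis unfolding mem_def e dvd_add_left_iff[OF k] ..
qed

lemma tw_le4: "c \<le> 4 \<Longrightarrow> \<not> tw c a b" unfolding tw_def by auto

lemma inP_mult: "c \<le> 10 \<Longrightarrow> inP c a b \<Longrightarrow> inP c a' b' \<Longrightarrow> inP c (a \<noteq> a') (b \<noteq> b')"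
  unfolding inP_def by auto

lemma tw_add: "c \<le> 10 \<Longrightarrow> inP c a b \<Longrightarrow> inP c a' b' \<Longrightarrow> tw c (a \<noteq> a') (b \<noteq> b') = (tw c a b \<noteq> tw c a' b')"
  unfolding inP_def tw_def by auto

lemma dvd_half_xor:
  fixes i j :: int and h :: int
  assumes "2 * h dvd i + (if t1 then h else 0)" "2 * h dvd j + (if t2 then h else 0)"
  shows "2 * h dvd i + j + (if t1 \<noteq> t2 then h else 0)"
proof -
  have "2 * h dvd (i + (if t1 then h else 0)) + (j + (if t2 then h else 0))" using assms by simp
  moreover have "(i + (if t1 then h else 0)) + (j + (if t2 then h else 0)) =
     (i + j + (if t1 \<noteq> t2 then h else 0)) + (if t1 \<and> t2 then 2 * h else 0)" by auto
  ultimately show ?thesis by (simp add: dvd_add_left_iff)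
qed

lemma pow_e: "1 \<le> e \<Longrightarrow> (2::int) ^ e = 2 * 2 ^ (e - 1)"
  by (cases e) auto

lemma mem_mult0:
  assumes c: "c \<le> 10" and e: "5 \<le> c \<Longrightarrow> 1 \<le> e"
    and "mem c e i a b" "mem c e j a' b'"
  shows "mem c e (i + j) (a \<noteq> a') (b \<noteq> b')"
proof (cases "c \<le> 4")
  case True
  then show ?thesis using assms inP_mult[OF c] by (auto simp: mem_def tw_le4)
next
  case False
  then have e1: "1 \<le> e" using e by simp
  have p1: "inP c a b" and d1: "2 * 2 ^ (e - 1) dvd i + (if tw c a b then 2 ^ (e - 1) else (0::int))"
    using assms(3) unfolding mem_def pow_e[OF e1] by auto
  have p2: "inP c a' b'" and d2: "2 * 2 ^ (e - 1) dvd j + (if tw c a' b' then 2 ^ (e - 1) else (0::int))"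
    using assms(4) unfolding mem_def pow_e[OF e1] by auto
  have "2 * 2 ^ (e - 1) dvd i + j + (if tw c a b \<noteq> tw c a' b' then 2 ^ (e - 1) else (0::int))"
    by (rule dvd_half_xor[OF d1 d2])
  then show ?thesis unfolding mem_def pow_e[OF e1] tw_add[OF c p1 p2]
    using inP_mult[OF c p1 p2] by simp
qed

lemma mem_inv0:
  assumes "mem c e i a b" shows "mem c e (- i) a b"
proof (cases "tw c a b")
  case False
  then show ?thesis using assms unfolding mem_def by simp
next
  case True
  show ?thesis
  proof (cases e)
    case 0 then show ?thesis using assms unfolding mem_def by simp
  next
    case (Suc k)
    have h: "2 * 2 ^ k dvd i + (2::int) ^ k" using assms True Suc unfolding mem_def by simp
    have d: "2 * 2 ^ k dvd (i + 2 ^ k) - 2 * (2::int) ^ k" by (rule dvd_diff[OF h dvd_refl])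
    have eq: "(- i + 2 ^ k) = - ((i + 2 ^ k) - 2 * (2::int) ^ k)" by simp
    have "2 * 2 ^ k dvd - i + (2::int) ^ k" unfolding eq dvd_minus_iff by (rule d)
    then show ?thesis using assms True Suc unfolding mem_def by simp
  qed
qed


lemma choose_c:
  fixes p w :: "bool \<Rightarrow> bool \<Rightarrow> bool"
  assumes p00: "p False False" and w00: "\<not> w False False"
    and pcl: "\<And>a b c d. p a b \<Longrightarrow> p c d \<Longrightarrow> p (a \<noteq> c) (b \<noteq> d)"
    and wadd: "\<And>a b c d. p a b \<Longrightarrow> p c d \<Longrightarrow> w (a \<noteq> c) (b \<noteq> d) = (w a b \<noteq> w c d)"
    and nt: "\<exists>a b. p a b \<and> (a \<or> b)"
  shows "\<exists>c. 1 \<le> c \<and> c \<le> 10 \<and> (\<forall>a b. p a b = inP c a b) \<and> (\<forall>a b. p a b \<longrightarrow> w a b = tw c a b)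
     \<and> (5 \<le> c \<longrightarrow> (\<exists>a b. p a b \<and> w a b))"
proof -
  have c1: "p True False \<Longrightarrow> p False True \<Longrightarrow> p True True" using pcl[of True False False True] by simp
  have c2: "p True False \<Longrightarrow> p True True \<Longrightarrow> p False True" using pcl[of True False True True] by simp
  have c3: "p False True \<Longrightarrow> p True True \<Longrightarrow> p True False" using pcl[of False True True True] by simp
  have w1: "p True False \<Longrightarrow> p False True \<Longrightarrow> w True True = (w True False \<noteq> w False True)"
    using wadd[of True False False True] by simp
  have nt': "p True False \<or> p False True \<or> p True True" using nt unfolding ex_bool_eq by auto
  consider (A) "p True False" "p False True" "p True True"
    | (B) "p True False" "\<not> p False True" "\<not> p True True"
    | (C) "\<not> p True False" "p False True" "\<not> p True True"
    | (D) "\<not> p True False" "\<not> p False True" "p True True"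
    using c1 c2 c3 nt' by blast
  then show ?thesis
  proof cases
    case A
    have wtt: "w True True = (w True False \<noteq> w False True)" using w1 A by simp
    consider (a1) "w True False" "w False True" | (a2) "w True False" "\<not> w False True"
      | (a3) "\<not> w True False" "w False True" | (a4) "\<not> w True False" "\<not> w False True" by blast
    then show ?thesis
    proof cases
      case a1 then show ?thesis using A p00 w00 wtt
        by (intro exI[of _ 10]) (simp add: inP_def tw_def all_bool_eq ex_bool_eq)
    next
      case a2 then show ?thesis using A p00 w00 wtt
        by (intro exI[of _ 9]) (simp add: inP_def tw_def all_bool_eq ex_bool_eq)
    next
      case a3 then show ?thesis using A p00 w00 wtt
        by (intro exI[of _ 8]) (simp add: inP_def tw_def all_bool_eq ex_bool_eq)
    next
      case a4 then show ?thesis using A p00 w00 wtt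
        by (intro exI[of _ 4]) (simp add: inP_def tw_def all_bool_eq ex_bool_eq)
    qed
  next
    case B
    show ?thesis
    proof (cases "w True False")
      case True then show ?thesis using B p00 w00
        by (intro exI[of _ 5]) (simp add: inP_def tw_def all_bool_eq ex_bool_eq)
    next
      case False then show ?thesis using B p00 w00
        by (intro exI[of _ 1]) (simp add: inP_def tw_def all_bool_eq ex_bool_eq)
    qed
  next
    case C
    show ?thesis
    proof (cases "w False True")
      case True then show ?thesis using C p00 w00
        by (intro exI[of _ 6]) (simp add: inP_def tw_def all_bool_eq ex_bool_eq)
    next
      case False then show ?thesis using C p00 w00
        by (intro exI[of _ 2]) (simp add: inP_def tw_def all_bool_eq ex_bool_eq)
    qed
  next
    case D
    show ?thesis
    proof (cases "w True True")
      case True then show ?thesis using D p00 w00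
        by (intro exI[of _ 7]) (simp add: inP_def tw_def all_bool_eq ex_bool_eq)
    next
      case False then show ?thesis using D p00 w00
        by (intro exI[of _ 3]) (simp add: inP_def tw_def all_bool_eq ex_bool_eq)
    qed
  qed
qed

lemma parity3:
  fixes h :: int
  assumes h: "0 < h" and d: "2 * h dvd (if A then h else 0) + (if B then h else 0) + (if C then h else 0)"
  shows "C = (A \<noteq> B)"
proof -
  have e: "(if A then h else 0) + (if B then h else 0) + (if C then h else 0) = (of_bool A + of_bool B + of_bool C) * h"
    by (simp add: distrib_right)
  have "2 dvd (of_bool A + of_bool B + of_bool C :: int)"
    using d h unfolding e by simp
  then show ?thesis by (cases A; cases B; cases C; simp)
qed


lemma classify:
  fixes q :: "int \<Rightarrow> bool \<Rightarrow> bool \<Rightarrow> bool" and m :: nat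
  assumes m2: "m \<ge> 2"
    and q0: "q 0 False False"
    and qmul: "\<And>i a b j c d. q i a b \<Longrightarrow> q j c d \<Longrightarrow>
                 q (i + j + (2::int) ^ (m - 1) * (of_bool b * of_bool c)) (a \<noteq> c) (b \<noteq> d)"
    and qinv: "\<And>i a b. q i a b \<Longrightarrow> q (- i + (2::int) ^ (m - 1) * (of_bool a * of_bool b)) a b"
    and qN: "q ((2::int) ^ m) False False"
    and qcx: "\<And>i b. q i True b \<Longrightarrow> q (i + (2::int) ^ (m - 1)) True b"
    and qcy: "\<And>i a. q i a True \<Longrightarrow> q (i + (2::int) ^ (m - 1)) a True"
    and nontriv: "\<exists>i a b. q i a b \<and> \<not> ((2::int) ^ m dvd i \<and> \<not> a \<and> \<not> b)"
  shows "\<exists>e c. ((c \<le> 4 \<and> e \<le> m - 1) \<or> (5 \<le> c \<and> c \<le> 10 \<and> 1 \<le> e \<and> e \<le> m - 1))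
               \<and> (\<forall>i a b. q i a b = mem c e i a b)"
proof -
  define M :: int where "M = 2 ^ (m - 1)"
  define N :: int where "N = 2 ^ m"
  have NM: "N = 2 * M" unfolding N_def M_def using m2 by (cases m) auto
  have Npos: "N > 0" unfolding N_def by simp
  note qmul = qmul[folded M_def] and qinv = qinv[folded M_def] and qN = qN[folded N_def]
    and qcx = qcx[folded M_def] and qcy = qcy[folded M_def] and nontriv = nontriv[folded N_def]
  have Kadd: "q (i + j) False False" if "q i False False" "q j False False" for i j
    using qmul[OF that] by simp
  have Kneg: "q (- i) False False" if "q i False False" for i
    using qinv[OF that] by simp
  have Kmuln: "q (i * int n) False False" if "q i False False" for i n
  proof (induction n)
    case 0 then show ?case using q0 by simp
  next
    case (Suc n)
    have "q (i * int n + i) False False" by (rule Kadd[OF Suc that])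
    moreover have "i * int (Suc n) = i * int n + i" by (simp add: distrib_left)
    ultimately show ?case by simp
  qed
  have Kmul: "q (i * k) False False" if "q i False False" for i k
  proof (cases "k \<ge> 0")
    case True
    then have "k = int (nat k)" by simp
    then show ?thesis using Kmuln[OF that, of "nat k"] by simp
  next
    case False
    then have "i * k = - (i * int (nat (- k)))" by simp
    then show ?thesis using Kneg[OF Kmuln[OF that, of "nat (-k)"]] by presburger
  qed
  define P where "P = (\<lambda>n::nat. 0 < n \<and> q (int n) False False)"
  define d where "d = (LEAST n. P n)"
  have Pn: "P (nat N)" unfolding P_def using Npos qN by simp
  have d: "P d" unfolding d_def by (rule LeastI[of P, OF Pn])
  have dmin: "d \<le> n" if "P n" for n unfolding d_def by (rule Least_le[of P, OF that])
  have K: "q i False False \<longleftrightarrow> int d dvd i" for i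
  proof
    assume "int d dvd i"
    then obtain k where "i = int d * k" by (auto elim: dvdE)
    then show "q i False False" using Kmul d unfolding P_def by simp
  next
    assume qi: "q i False False"
    let ?r = "i mod int d"
    have dpos: "0 < d" using d unfolding P_def by simp
    have "q (i + int d * (- (i div int d))) False False"
      by (rule Kadd[OF qi Kmul]) (use d in \<open>simp add: P_def\<close>)
    moreover have "i + int d * (- (i div int d)) = ?r" by (simp add: algebra_simps minus_div_mult_eq_mod)
    ultimately have qr: "q ?r False False" by simp
    show "int d dvd i"
    proof (rule ccontr)
      assume "\<not> int d dvd i"
      then have "?r \<noteq> 0" by (simp add: dvd_eq_mod_eq_0)
      moreover have "0 \<le> ?r" "?r < int d" using dpos by auto
      ultimately have "P (nat ?r)" "nat ?r < d" unfolding P_def using qr by auto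
      then show False using dmin by fastforce
    qed
  qed
  have "int d dvd N" using K qN by simp
  then have "d dvd 2 ^ m" unfolding N_def by (metis of_nat_dvd_iff of_nat_numeral of_nat_power)
  then obtain e where em0: "e \<le> m" and de: "d = 2 ^ e"
    using divides_primepow_nat[OF two_is_prime_nat] by blast
  have K2: "q i False False \<longleftrightarrow> (2::int) ^ e dvd i" for i using K[of i] de by simp
  have eN: "(2::int) ^ e dvd N" unfolding N_def using em0 by (simp add: le_imp_power_dvd)
  have fib: "(2::int) ^ e dvd i - j" if "q i a b" "q j a b" for i j a b
  proof -
    have h1: "q (i + (- j + M * (of_bool a * of_bool b)) + M * (of_bool b * of_bool a)) False False"
      using qmul[OF that(1) qinv[OF that(2)]] by simp
    have eq: "i + (- j + M * (of_bool a * of_bool b)) + M * (of_bool b * of_bool a) = (i - j) + N * (of_bool a * of_bool b)"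
      unfolding NM by (simp add: algebra_simps)
    have "(2::int) ^ e dvd (i - j) + N * (of_bool a * of_bool b)" using h1 unfolding eq K2 .
    moreover have "(2::int) ^ e dvd N * (of_bool a * of_bool b)" using eN by simp
    ultimately show ?thesis using dvd_add_left_iff by blast
  qed
  have fib2: "q i a b" if "q j a b" "(2::int) ^ e dvd i - j" for i j a b
  proof -
    have "q (i - j) False False" using K2 that(2) by simp
    from qmul[OF this that(1)] show ?thesis by simp
  qed
  show ?thesis
  proof (cases "\<exists>i a b. q i a b \<and> (a \<or> b)")
    case False
    obtain i0 a0 b0 where q0': "q i0 a0 b0" and nt0: "\<not> (N dvd i0 \<and> \<not> a0 \<and> \<not> b0)" using nontriv by blast
    have ab: "\<not> a0" "\<not> b0" using False q0' by auto
    have "(2::int) ^ e dvd i0" using K2 q0' ab by simp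
    then have "e \<noteq> m" using nt0 ab unfolding N_def by auto
    then have em: "e \<le> m - 1" using em0 by simp
    have "\<forall>i a b. q i a b = mem 0 e i a b"
    proof (intro allI)
      fix i a b
      show "q i a b = mem 0 e i a b"
      proof (cases "a \<or> b")
        case True then show ?thesis using False by (auto simp: mem_def inP_def)
      next
        case F: False then show ?thesis using K2[of i] by (simp add: mem_def inP_def tw_def)
      qed
    qed
    then show ?thesis using em by blast
  next
    case True
    then obtain i0 a0 b0 where q0': "q i0 a0 b0" and ab0: "a0 \<or> b0" by blast
    have eM: "(2::int) ^ e dvd M"
    proof (cases a0)
      case True
      then have "q (i0 + M) a0 b0" using qcx q0' by simp
      from fib[OF this q0'] show ?thesis by simp
    next
      case False
      then have "b0" using ab0 by simp
      then have "q (i0 + M) a0 b0" using qcy q0' by simp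
      from fib[OF this q0'] show ?thesis by simp
    qed
    have em: "e \<le> m - 1"
    proof (rule ccontr)
      assume "\<not> e \<le> m - 1"
      then have "(2::int) ^ (m - 1) < 2 ^ e" by simp
      moreover have "(0::int) < 2 ^ (m - 1)" by simp
      ultimately show False using eM unfolding M_def using zdvd_not_zless by blast
    qed
    define p where "p = (\<lambda>a b. \<exists>i. q i a b)"
    define w where "w = (\<lambda>a b. \<not> q 0 a b)"
    have sq: "(2::int) ^ e dvd 2 * j" if "q j a b" for j a b
    proof -
      have "q (j + j + M * (of_bool b * of_bool a)) (a \<noteq> a) (b \<noteq> b)" by (rule qmul[OF that that])
      then have "q (j + j + M * (of_bool b * of_bool a)) False False" by simp
      then have h: "(2::int) ^ e dvd (j + j) + M * (of_bool b * of_bool a)" unfolding K2 .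
      have "(2::int) ^ e dvd M * (of_bool b * of_bool a)" using eM by (rule dvd_mult2)
      then have "(2::int) ^ e dvd j + j" using h dvd_add_left_iff by blast
      then show ?thesis by (simp only: mult_2)
    qed
    have key: "q i a b = ((2::int) ^ e dvd i + (if w a b then 2 ^ (e - 1) else 0))" if pab: "p a b" for i a b
    proof -
      obtain j where qj: "q j a b" using pab unfolding p_def by blast
      show ?thesis
      proof (cases e)
        case 0
        have "q i a b" using fib2[OF qj] 0 by simp
        moreover have "q 0 a b" using fib2[OF qj] 0 by simp
        ultimately show ?thesis using 0 unfolding w_def by simp
      next
        case (Suc k)
        have e2: "(2::int) ^ e = 2 * 2 ^ k" using Suc by simp
        show ?thesis
        proof (cases "w a b")
          case False
          then have q00: "q 0 a b" unfolding w_def by simp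
          have "q i a b \<longleftrightarrow> (2::int) ^ e dvd i - 0" using fib[of i a b 0] fib2[OF q00, of i] q00 by blast
          then show ?thesis using False by simp
        next
          case True
          then have nq0: "\<not> q 0 a b" unfolding w_def by simp
          have "2 * 2 ^ k dvd 2 * j" using sq[OF qj] e2 by simp
          then have "(2::int) ^ k dvd j" by simp
          then obtain l where jl: "j = 2 ^ k * l" by (auto elim: dvdE)
          have "odd l"
          proof
            assume "even l"
            then obtain l' where "l = 2 * l'" by (auto elim: evenE)
            then have "(2::int) ^ e dvd 0 - j" using jl e2 by simp
            then show False using fib2[OF qj] nq0 by blast
          qed
          then obtain l' where l': "l = 2 * l' + 1" by (auto elim: oddE)
          have jh: "j + 2 ^ k = 2 * 2 ^ k * (l' + 1)" using jl l' by (simp add: algebra_simps)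
          have hj: "(2::int) ^ e dvd j + 2 ^ k" unfolding jh e2 by simp
          have eqi: "i + 2 ^ k = (i - j) + (j + (2::int) ^ k)" by simp
          have iff1: "(2::int) ^ e dvd i + 2 ^ k \<longleftrightarrow> (2::int) ^ e dvd i - j"
            unfolding eqi by (rule dvd_add_left_iff[OF hj])
          have iff2: "q i a b \<longleftrightarrow> (2::int) ^ e dvd i - j" using fib[of i a b j] fib2[OF qj, of i] qj by blast
          have "e - 1 = k" using Suc by simp
          then show ?thesis unfolding iff2 iff1[symmetric] using True by simp
        qed
      qed
    qed
    have p00: "p False False" unfolding p_def using q0 by blast
    have w00: "\<not> w False False" unfolding w_def using q0 by simp
    have pcl: "p (a \<noteq> c) (b \<noteq> d)" if "p a b" "p c d" for a b c d
      using that qmul unfolding p_def by blast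
    have wadd: "w (a \<noteq> c) (b \<noteq> d) = (w a b \<noteq> w c d)" if pab: "p a b" and pcd: "p c d" for a b c d
    proof (cases e)
      case 0
      have "\<not> w a b" "\<not> w c d" "\<not> w (a \<noteq> c) (b \<noteq> d)"
        using key[OF pab, of 0] key[OF pcd, of 0] key[OF pcl[OF pab pcd], of 0] 0 unfolding w_def by auto
      then show ?thesis by simp
    next
      case (Suc k)
      have e2: "(2::int) ^ e = 2 * 2 ^ k" using Suc by simp
      define W1 where "W1 = (if w a b then (2::int) ^ k else 0)"
      define W2 where "W2 = (if w c d then (2::int) ^ k else 0)"
      define W3 where "W3 = (if w (a \<noteq> c) (b \<noteq> d) then (2::int) ^ k else 0)"
      have "q W1 a b" unfolding key[OF pab] W1_def using Suc by (cases "w a b") simp_all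
      moreover have "q W2 c d" unfolding key[OF pcd] W2_def using Suc by (cases "w c d") simp_all
      ultimately have "q (W1 + W2 + M * (of_bool b * of_bool c)) (a \<noteq> c) (b \<noteq> d)" by (rule qmul)
      then have h0: "2 ^ e dvd (W1 + W2 + M * (of_bool b * of_bool c)) + (if w (a \<noteq> c) (b \<noteq> d) then 2 ^ (e - 1) else 0)"
        unfolding key[OF pcl[OF pab pcd]] .
      have W3eq: "(if w (a \<noteq> c) (b \<noteq> d) then (2::int) ^ (e - 1) else 0) = W3" unfolding W3_def using Suc by simp
      have re: "(W1 + W2 + M * (of_bool b * of_bool c)) + W3 = (W1 + W2 + W3) + M * (of_bool b * of_bool c)" by simp
      have "2 * 2 ^ k dvd (W1 + W2 + W3) + M * (of_bool b * of_bool c)"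
        using h0 unfolding W3eq re e2 .
      moreover have "2 * 2 ^ k dvd M * (of_bool b * of_bool c)" using eM e2 by simp
      ultimately have "2 * 2 ^ k dvd W1 + W2 + W3" using dvd_add_left_iff by blast
      then show ?thesis using parity3[of "2 ^ k" "w a b" "w c d" "w (a \<noteq> c) (b \<noteq> d)"]
        unfolding W1_def W2_def W3_def by simp
    qed
    have nt: "\<exists>a b. p a b \<and> (a \<or> b)" unfolding p_def using q0' ab0 by blast
    obtain c where c1: "1 \<le> c" and c10: "c \<le> 10" and pc: "\<forall>a b. p a b = inP c a b"
        and wc: "\<forall>a b. p a b \<longrightarrow> w a b = tw c a b" and c5: "5 \<le> c \<longrightarrow> (\<exists>a b. p a b \<and> w a b)"
      using choose_c[of p w, OF p00 w00 pcl wadd nt] by blast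
    have e1: "1 \<le> e" if c5': "5 \<le> c"
    proof (rule ccontr)
      assume "\<not> 1 \<le> e"
      then have "e = 0" by simp
      obtain a b where "p a b" "w a b" using c5 c5' by blast
      then show False using key[of a b 0] \<open>e = 0\<close> unfolding w_def by simp
    qed
    have "\<forall>i a b. q i a b = mem c e i a b"
    proof (intro allI)
      fix i a b
      show "q i a b = mem c e i a b"
      proof (cases "p a b")
        case True
        then show ?thesis using key[OF True, of i] pc wc unfolding mem_def by simp
      next
        case False
        then show ?thesis using pc unfolding mem_def p_def by auto
      qed
    qed
    moreover have "(c \<le> 4 \<and> e \<le> m - 1) \<or> (5 \<le> c \<and> c \<le> 10 \<and> 1 \<le> e \<and> e \<le> m - 1)"
      using em c10 e1 by (cases "c \<le> 4") auto
    ultimately show ?thesis by blast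
  qed
qed


lemma inP_FF: "inP k False False" unfolding inP_def by simp
lemma tw_FF: "\<not> tw k False False" unfolding tw_def by simp

lemma mem_FF: "mem k e i False False = ((2::int) ^ e dvd i)"
  unfolding mem_def using inP_FF tw_FF by simp

lemma mem_e0: "mem k 0 i a b = inP k a b" unfolding mem_def by simp

lemma mem_0: assumes "1 \<le> e" shows "mem k e 0 a b = (inP k a b \<and> \<not> tw k a b)"
proof -
  have "\<not> (2::int) ^ e dvd 2 ^ (e - 1)"
  proof -
    have h: "(0::int) < 2 ^ (e - 1)" by simp
    have "\<not> 2 * (2::int) ^ (e - 1) dvd 2 ^ (e - 1)" by (rule zdvd_not_zless[OF h]) (use h in simp)
    then show ?thesis unfolding pow_e[OF assms] .
  qed
  then show ?thesis unfolding mem_def by auto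
qed

lemma mem_h: assumes "1 \<le> e" shows "mem k e (2 ^ (e - 1)) a b = (inP k a b \<and> tw k a b)"
proof -
  have "\<not> (2::int) ^ e dvd 2 ^ (e - 1)"
  proof -
    have h: "(0::int) < 2 ^ (e - 1)" by simp
    have "\<not> 2 * (2::int) ^ (e - 1) dvd 2 ^ (e - 1)" by (rule zdvd_not_zless[OF h]) (use h in simp)
    then show ?thesis unfolding pow_e[OF assms] .
  qed
  moreover have "(2::int) ^ e dvd 2 ^ (e - 1) + 2 ^ (e - 1)" unfolding pow_e[OF assms] mult_2 by (rule dvd_refl)
  ultimately show ?thesis unfolding mem_def by auto
qed

lemma mem_diff: assumes "mem k e i a b" "mem k e j a b" shows "(2::int) ^ e dvd i - j"
proof -
  let ?X = "if tw k a b then (2::int) ^ (e - 1) else 0"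
  have "(2::int) ^ e dvd (i + ?X) - (j + ?X)" using assms unfolding mem_def by (intro dvd_diff) auto
  then show ?thesis by simp
qed

definition sig :: "nat \<Rightarrow> bool list" where
  "sig k = [inP k True False, inP k False True, inP k True True,
            inP k True False \<and> tw k True False, inP k False True \<and> tw k False True, inP k True True \<and> tw k True True]"

lemma sig_inj: assumes "k \<le> 10" "k' \<le> 10" "sig k = sig k'" shows "k = k'"
proof -
  have r: "k \<le> 10 \<longleftrightarrow> k \<in> {0,1,2,3,4,5,6,7,8,9,10}" for k :: nat by (auto; presburger)
  have all: "\<forall>k\<in>{0,1,2,3,4,5,6,7,8,9,10::nat}. \<forall>k'\<in>{0,1,2,3,4,5,6,7,8,9,10::nat}. sig k = sig k' \<longrightarrow> k = k'"
    by (simp add: sig_def inP_def tw_def)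
  have kk: "k \<in> {0,1,2,3,4,5,6,7,8,9,10}" "k' \<in> {0,1,2,3,4,5,6,7,8,9,10}" using assms(1,2) r by blast+
  show ?thesis using bspec[OF bspec[OF all kk(1)] kk(2)] assms(3) by blast
qed

definition valid :: "nat \<Rightarrow> nat \<Rightarrow> nat \<Rightarrow> bool" where
  "valid m e k = ((k \<le> 4 \<and> e \<le> m - 1) \<or> (5 \<le> k \<and> k \<le> 10 \<and> 1 \<le> e \<and> e \<le> m - 1))"

lemma mem_inj:
  assumes v: "valid m e k" and v': "valid m e' k'" and eq: "\<And>i a b. mem k e i a b = mem k' e' i a b"
  shows "e = e' \<and> k = k'"
proof -
  have d: "(2::int) ^ e dvd i \<longleftrightarrow> (2::int) ^ e' dvd i" for i using eq[of i False False] by (simp add: mem_FF)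
  have "(2::int) ^ e' dvd 2 ^ e" "(2::int) ^ e dvd 2 ^ e'" using d[of "2 ^ e"] d[of "2 ^ e'"] by auto
  then have ee: "e = e'" by (simp add: dvd_power_iff)
  have k10: "k \<le> 10" "k' \<le> 10" using v v' unfolding valid_def by auto
  show ?thesis
  proof (cases "e = 0")
    case True
    then have "k \<le> 4" "k' \<le> 4" using v v' ee unfolding valid_def by auto
    have "inP k a b = inP k' a b" for a b using eq[of 0 a b] True ee by (simp add: mem_e0)
    moreover have "tw k a b = False" "tw k' a b = False" for a b using \<open>k \<le> 4\<close> \<open>k' \<le> 4\<close> tw_le4 by auto
    ultimately have "sig k = sig k'" unfolding sig_def by simp
    then show ?thesis using sig_inj k10 ee by blast
  next
    case False
    then have e1: "1 \<le> e" by simp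
    have A: "(inP k a b \<and> \<not> tw k a b) = (inP k' a b \<and> \<not> tw k' a b)" for a b
      using eq[of 0 a b] mem_0[OF e1] ee by simp
    have B: "(inP k a b \<and> tw k a b) = (inP k' a b \<and> tw k' a b)" for a b
      using eq[of "2 ^ (e - 1)" a b] mem_h[OF e1] ee by simp
    have "inP k a b = inP k' a b" for a b using A[of a b] B[of a b] by blast
    then have "sig k = sig k'" unfolding sig_def using B by simp
    then show ?thesis using sig_inj k10 ee by blast
  qed
qed



definition params :: "nat \<Rightarrow> (nat \<times> nat) list" where
  "params m = concat (map (\<lambda>a. [(a,1),(a,2),(a,3),(a,4)]) [0..<m])
     @ concat (map (\<lambda>b. [(Suc b,5),(Suc b,6),(Suc b,7),(Suc b,8),(Suc b,9),(Suc b,10)]) [0..<m - 1])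
     @ map (\<lambda>c. (c,0)) [0..<m]"

lemma distinct_params: "distinct (params m)"
  unfolding params_def by (auto simp: distinct_map inj_on_def intro!: distinct_concat)

lemma set_params: assumes "m \<ge> 2" shows "set (params m) = {(e,k). valid m e k}"
proof
  show "set (params m) \<subseteq> {(e,k). valid m e k}"
    unfolding params_def valid_def by auto
next
  show "{(e,k). valid m e k} \<subseteq> set (params m)"
  proof (clarify)
    fix e k assume v: "valid m e k"
    show "(e, k) \<in> set (params m)"
    proof (cases "k = 0")
      case True
      then show ?thesis using v assms unfolding valid_def params_def by auto
    next
      case False
      show ?thesis
      proof (cases "k \<le> 4")
        case True
        then have "k = 1 \<or> k = 2 \<or> k = 3 \<or> k = 4" using False by auto
        moreover have "e < m" using v assms unfolding valid_def by auto
        ultimately show ?thesis unfolding params_def by auto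
      next
        case k4: False
        then have "k = 5 \<or> k = 6 \<or> k = 7 \<or> k = 8 \<or> k = 9 \<or> k = 10" using v unfolding valid_def by auto
        moreover obtain b where "e = Suc b" "b < m - 1" using v k4 unfolding valid_def
          by (metis Suc_le_eq Suc_pred le_less_trans less_numeral_extra(1) not_le)
        ultimately show ?thesis unfolding params_def by auto
      qed
    qed
  qed
qed


locale d1 = group G for G (structure) +
  fixes x y t :: 'a and m :: nat
  assumes m2: "m \<ge> 2"
    and xc: "x \<in> carrier G" and yc: "y \<in> carrier G" and tc: "t \<in> carrier G"
    and x2: "x [^] (2::nat) = \<one>" and y2: "y [^] (2::nat) = \<one>" and tN: "t [^] ((2::nat) ^ m) = \<one>"
    and rel: "inv y \<otimes> inv x \<otimes> y \<otimes> x \<otimes> t [^] ((2::nat) ^ (m - 1)) = \<one>"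
    and tcomm: "\<forall>g \<in> carrier G. t \<otimes> g = g \<otimes> t"
    and gen: "generate G {x, y, t} = carrier G"
    and ord: "order G = 2 ^ (m + 2)"
begin

definition MM :: int where "MM = 2 ^ (m - 1)"
definition NN :: int where "NN = 2 ^ m"

lemma NN_MM: "NN = 2 * MM"
proof -
  obtain k where "m = Suc k" using m2 by (cases m) auto
  then show ?thesis unfolding NN_def MM_def by simp
qed

lemma MM_even: "2 dvd MM"
  using m2 unfolding MM_def by (simp add: dvd_power)  

definition gg :: "int \<Rightarrow> bool \<Rightarrow> bool \<Rightarrow> 'a" where
  "gg i a b = t [^] i \<otimes> (if a then x else \<one>) \<otimes> (if b then y else \<one>)"

lemma xx: "x \<otimes> x = \<one>" using x2 xc by (simp add: numeral_2_eq_2 nat_pow_Suc[symmetric]) 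
lemma yy: "y \<otimes> y = \<one>" using y2 yc by (simp add: numeral_2_eq_2 nat_pow_Suc[symmetric]) 
lemma xinv: "inv x = x" using xx xc by (simp add: inv_equality)
lemma yinv: "inv y = y" using yy yc by (simp add: inv_equality)

lemma tpow_nat_comm: "g \<in> carrier G \<Longrightarrow> t [^] (n::nat) \<otimes> g = g \<otimes> t [^] n"
proof (induction n)
  case 0 then show ?case by simp
next
  case (Suc n)
  have "t [^] Suc n \<otimes> g = t [^] n \<otimes> (t \<otimes> g)" using Suc tc by (simp add: m_assoc)
  also have "\<dots> = t [^] n \<otimes> (g \<otimes> t)" using tcomm Suc by simp
  also have "\<dots> = (g \<otimes> t [^] n) \<otimes> t" using Suc tc by (simp flip: m_assoc)
  also have "\<dots> = g \<otimes> t [^] Suc n" using Suc tc by (simp add: m_assoc)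
  finally show ?case .
qed

lemma inv_comm: assumes "c \<in> carrier G" "g \<in> carrier G" "\<And>g. g \<in> carrier G \<Longrightarrow> c \<otimes> g = g \<otimes> c"
  shows "inv c \<otimes> g = g \<otimes> inv c"
proof -
  have "c \<otimes> (inv c \<otimes> g) = c \<otimes> (g \<otimes> inv c)"
    using assms by (metis inv_closed m_assoc r_inv l_inv l_one r_one)
  then show ?thesis using assms by simp
qed

lemma tpow_comm: assumes g: "g \<in> carrier G" shows "t [^] (i::int) \<otimes> g = g \<otimes> t [^] i"
proof (cases "i < 0")
  case False
  have e: "t [^] i = t [^] (nat i)" by (simp add: int_pow_def2 False)
  show ?thesis unfolding e by (rule tpow_nat_comm[OF g])
next
  case True
  have e: "t [^] i = inv (t [^] (nat (-i)))" by (simp add: int_pow_def2 True)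
  show ?thesis unfolding e
    by (rule inv_comm) (auto intro: tpow_nat_comm simp: g tc)
qed

lemma gg_closed[simp]: "gg i a b \<in> carrier G"
  unfolding gg_def using xc yc tc by auto

lemma tM: "t [^] ((2::nat) ^ (m - 1)) = t [^] MM"
  unfolding MM_def by (metis int_pow_int of_nat_numeral of_nat_power)

lemma tNN: "t [^] NN = \<one>"
  unfolding NN_def using tN by (metis int_pow_int of_nat_numeral of_nat_power)

lemma yx: "y \<otimes> x = x \<otimes> y \<otimes> t [^] MM"
proof -
  have r: "y \<otimes> x \<otimes> y \<otimes> x \<otimes> t [^] MM = \<one>" using rel xinv yinv tM by simp
  have zz: "t [^] MM \<otimes> t [^] MM = \<one>" using tNN NN_MM tc by (simp flip: int_pow_mult)
  have "y \<otimes> x \<otimes> (y \<otimes> x \<otimes> t [^] MM) = \<one>" using r xc yc tc by (simp add: m_assoc)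
  hence "y \<otimes> x \<otimes> (y \<otimes> x \<otimes> t [^] MM) \<otimes> (x \<otimes> y \<otimes> t [^] MM) = x \<otimes> y \<otimes> t [^] MM"
    using xc yc tc by simp
  moreover have "y \<otimes> x \<otimes> (y \<otimes> x \<otimes> t [^] MM) \<otimes> (x \<otimes> y \<otimes> t [^] MM) = y \<otimes> x"
  proof -
    have "(y \<otimes> x \<otimes> t [^] MM) \<otimes> (x \<otimes> y \<otimes> t [^] MM) = y \<otimes> x \<otimes> (t [^] MM \<otimes> (x \<otimes> y)) \<otimes> t [^] MM"
      using xc yc tc by (simp add: m_assoc)
    also have "\<dots> = y \<otimes> x \<otimes> (x \<otimes> y \<otimes> t [^] MM) \<otimes> t [^] MM"
      using tpow_comm xc yc by simp
    also have "\<dots> = y \<otimes> (x \<otimes> x) \<otimes> y \<otimes> (t [^] MM \<otimes> t [^] MM)"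
      using xc yc tc by (simp add: m_assoc)
    also have "\<dots> = \<one>" using xx yy zz yc by simp
    finally have "(y \<otimes> x \<otimes> t [^] MM) \<otimes> (x \<otimes> y \<otimes> t [^] MM) = \<one>" .
    then show ?thesis using xc yc tc by (simp add: m_assoc)
  qed
  ultimately show ?thesis by simp
qed


definition xa :: "bool \<Rightarrow> 'a" where "xa a = (if a then x else \<one>)"
definition yb :: "bool \<Rightarrow> 'a" where "yb b = (if b then y else \<one>)"

lemma xa_closed[simp]: "xa a \<in> carrier G" unfolding xa_def using xc by simp
lemma yb_closed[simp]: "yb a \<in> carrier G" unfolding yb_def using yc by simp

lemma gg_alt: "gg i a b = t [^] i \<otimes> (xa a \<otimes> yb b)"
  unfolding gg_def xa_def[symmetric] yb_def[symmetric] using tc by (simp add: m_assoc)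

lemma xa_mult: "xa a \<otimes> xa c = xa (a \<noteq> c)"
  unfolding xa_def using xx xc by auto
lemma yb_mult: "yb a \<otimes> yb c = yb (a \<noteq> c)"
  unfolding yb_def using yy yc by auto

lemma yb_xa: "yb b \<otimes> xa c = xa c \<otimes> yb b \<otimes> t [^] (MM * (of_bool b * of_bool c))"
  unfolding yb_def xa_def using yx xc yc tc by auto

lemma W_mult: "(xa a \<otimes> yb b) \<otimes> (xa c \<otimes> yb d) =
   t [^] (MM * (of_bool b * of_bool c)) \<otimes> (xa (a \<noteq> c) \<otimes> yb (b \<noteq> d))"
proof -
  let ?k = "MM * (of_bool b * of_bool c)"
  have "(xa a \<otimes> yb b) \<otimes> (xa c \<otimes> yb d) = xa a \<otimes> (yb b \<otimes> xa c) \<otimes> yb d" by (simp add: m_assoc)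
  also have "\<dots> = xa a \<otimes> (xa c \<otimes> yb b \<otimes> t [^] ?k) \<otimes> yb d" by (simp only: yb_xa)
  also have "\<dots> = (xa a \<otimes> xa c) \<otimes> (yb b \<otimes> yb d) \<otimes> t [^] ?k"
    using tc by (simp add: m_assoc tpow_comm[of "yb d"])
  also have "\<dots> = xa (a \<noteq> c) \<otimes> yb (b \<noteq> d) \<otimes> t [^] ?k" by (simp only: xa_mult yb_mult)
  also have "\<dots> = t [^] ?k \<otimes> (xa (a \<noteq> c) \<otimes> yb (b \<noteq> d))" using tc by (simp add: tpow_comm)
  finally show ?thesis .
qed

lemma gg_mult: "gg i a b \<otimes> gg j c d = gg (i + j + MM * (of_bool b * of_bool c)) (a \<noteq> c) (b \<noteq> d)"
proof -
  let ?k = "MM * (of_bool b * of_bool c)"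
  let ?W1 = "xa a \<otimes> yb b" and ?W2 = "xa c \<otimes> yb d"
  have "gg i a b \<otimes> gg j c d = t [^] i \<otimes> (?W1 \<otimes> t [^] j) \<otimes> ?W2"
    unfolding gg_alt using tc by (simp add: m_assoc)
  also have "\<dots> = t [^] i \<otimes> (t [^] j \<otimes> ?W1) \<otimes> ?W2"
    by (simp only: tpow_comm[of ?W1, simplified])
  also have "\<dots> = t [^] i \<otimes> t [^] j \<otimes> (?W1 \<otimes> ?W2)" using tc by (simp add: m_assoc)
  also have "\<dots> = t [^] i \<otimes> t [^] j \<otimes> (t [^] ?k \<otimes> (xa (a \<noteq> c) \<otimes> yb (b \<noteq> d)))" by (simp only: W_mult)
  also have "\<dots> = gg (i + j + ?k) (a \<noteq> c) (b \<noteq> d)"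
    unfolding gg_alt using tc by (simp add: m_assoc int_pow_mult)
  finally show ?thesis .
qed

lemma tpow_period: "t [^] (i + NN * k) = t [^] i"
  using tc tNN by (simp add: int_pow_mult int_pow_pow[symmetric])

lemma gg_period: "gg (i + NN * k) a b = gg i a b"
  unfolding gg_def by (simp add: tpow_period)

lemma gg_one: "gg 0 False False = \<one>" unfolding gg_def by simp

lemma gg_inv: "inv (gg i a b) = gg (- i + MM * (of_bool a * of_bool b)) a b"
proof (rule inv_equality)
  show "gg (- i + MM * (of_bool a * of_bool b)) a b \<otimes> gg i a b = \<one>"
  proof (cases "a \<and> b")
    case True
    then show ?thesis using gg_period[where i=0 and k=1 and a=False and b=False] NN_MM by (simp add: gg_mult gg_one)
  next
    case False
    then show ?thesis by (auto simp add: gg_mult gg_one)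
  qed
qed auto


lemma carrier_gg: "carrier G = range (\<lambda>(i,a,b). gg i a b)"
proof
  show "range (\<lambda>(i,a,b). gg i a b) \<subseteq> carrier G" by auto
  have sg: "subgroup (range (\<lambda>(i,a,b). gg i a b)) G"
  proof (rule subgroupI)
    show "range (\<lambda>(i,a,b). gg i a b) \<subseteq> carrier G" by auto
  next
    show "range (\<lambda>(i,a,b). gg i a b) \<noteq> {}" by auto
  next
    fix h assume "h \<in> range (\<lambda>(i,a,b). gg i a b)"
    then obtain i a b where "h = gg i a b" by auto
    then show "inv h \<in> range (\<lambda>(i,a,b). gg i a b)"
      by (intro image_eqI[where x="(- i + MM * (of_bool a * of_bool b), a, b)"]) (simp_all add: gg_inv)
  next
    fix h k assume "h \<in> range (\<lambda>(i,a,b). gg i a b)" "k \<in> range (\<lambda>(i,a,b). gg i a b)"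
    then obtain i a b j c d where "h = gg i a b" "k = gg j c d" by auto
    then show "h \<otimes> k \<in> range (\<lambda>(i,a,b). gg i a b)"
      by (intro image_eqI[where x="(i + j + MM * (of_bool b * of_bool c), a \<noteq> c, b \<noteq> d)"]) (simp_all add: gg_mult)
  qed
  have "x = gg 0 True False" "y = gg 0 False True" "t = gg 1 False False"
    unfolding gg_def using xc yc tc by auto
  hence "{x, y, t} \<subseteq> range (\<lambda>(i,a,b). gg i a b)"
    by (auto simp: image_iff)
  then show "carrier G \<subseteq> range (\<lambda>(i,a,b). gg i a b)"
    using generate_subgroup_incl[OF _ sg] gen by metis
qed

lemma NN_pos: "NN > 0" unfolding NN_def by simp

lemma gg_mod: "gg (i mod NN) a b = gg i a b"
  using gg_period[of "i mod NN" "i div NN" a b] by (simp add: mult.commute)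

definition II :: "(int \<times> bool \<times> bool) set" where "II = {0..<NN} \<times> UNIV \<times> UNIV"

lemma carrier_II: "carrier G = (\<lambda>(i,a,b). gg i a b) ` II"
proof
  show "(\<lambda>(i,a,b). gg i a b) ` II \<subseteq> carrier G" by auto
  show "carrier G \<subseteq> (\<lambda>(i,a,b). gg i a b) ` II"
  proof
    fix h assume "h \<in> carrier G"
    then obtain i a b where h: "h = gg i a b" using carrier_gg by auto
    have "(i mod NN, a, b) \<in> II" unfolding II_def using NN_pos by auto
    then show "h \<in> (\<lambda>(i,a,b). gg i a b) ` II" using h gg_mod
      by (metis (no_types, lifting) case_prod_conv image_eqI)
  qed
qed

lemma card_II: "card II = 2 ^ (m + 2)"
proof -
  have c: "card {0..<NN} = 2 ^ m" unfolding NN_def by (simp add: nat_power_eq)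
  show ?thesis unfolding II_def card_cartesian_product c by simp
qed

lemma inj_II: "inj_on (\<lambda>(i,a,b). gg i a b) II"
proof -
  have "card (carrier G) = 2 ^ (m + 2)" using ord unfolding order_def .
  then have "card ((\<lambda>(i,a,b). gg i a b) ` II) = card II" using carrier_II card_II by simp
  moreover have "finite II" unfolding II_def by simp
  ultimately show ?thesis using inj_on_iff_eq_card by blast
qed

lemma gg_eq: "gg i a b = gg j c d \<longleftrightarrow> i mod NN = j mod NN \<and> a = c \<and> b = d"
proof
  assume "gg i a b = gg j c d"
  then have "gg (i mod NN) a b = gg (j mod NN) c d" by (simp add: gg_mod)
  moreover have "(i mod NN, a, b) \<in> II" "(j mod NN, c, d) \<in> II" unfolding II_def using NN_pos by auto
  ultimately show "i mod NN = j mod NN \<and> a = c \<and> b = d"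
    using inj_II unfolding inj_on_def by fastforce
next
  assume h: "i mod NN = j mod NN \<and> a = c \<and> b = d"
  have "gg i a b = gg (i mod NN) a b" by (simp add: gg_mod)
  also have "\<dots> = gg (j mod NN) c d" using h by simp
  also have "\<dots> = gg j c d" by (simp add: gg_mod)
  finally show "gg i a b = gg j c d" .
qed


definition EE :: "nat \<Rightarrow> nat \<Rightarrow> 'a set" where
  "EE e k = {gg i a b | i a b. mem k e i a b}"

lemma MM_def': "MM = 2 ^ (m - 1)" by (rule MM_def)

lemma dvd_MM: "e \<le> m - 1 \<Longrightarrow> (2::int) ^ e dvd MM" unfolding MM_def by (rule le_imp_power_dvd)
lemma dvd_NN: "e \<le> m \<Longrightarrow> (2::int) ^ e dvd NN" unfolding NN_def by (rule le_imp_power_dvd)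

lemma EE_carrier: "EE e k \<subseteq> carrier G" unfolding EE_def by auto

lemma memE: assumes e: "e \<le> m" shows "gg i a b \<in> EE e k \<longleftrightarrow> mem k e i a b"
proof
  assume "gg i a b \<in> EE e k"
  then obtain j a' b' where eq: "gg i a b = gg j a' b'" and mj: "mem k e j a' b'" unfolding EE_def by blast
  then have ab: "a = a'" "b = b'" and md: "i mod NN = j mod NN" using gg_eq by auto
  have "NN dvd i - j" using md by (simp add: mod_eq_dvd_iff)
  then have d: "(2::int) ^ e dvd i - j" using dvd_NN[OF e] dvd_trans by blast
  have "mem k e (j + (i - j)) a' b' = mem k e j a' b'" by (rule mem_shift[OF d])
  then have "mem k e i a' b'" using mj by simp
  then show "mem k e i a b" using ab by simp
next
  assume "mem k e i a b" then show "gg i a b \<in> EE e k" unfolding EE_def by blast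
qed

lemma EE_subgroup:
  assumes v: "valid m e k" shows "subgroup (EE e k) G"
proof -
  have k10: "k \<le> 10" and e1: "5 \<le> k \<Longrightarrow> 1 \<le> e" and em: "e \<le> m - 1" using v unfolding valid_def by auto
  show ?thesis
  proof (rule subgroupI)
    show "EE e k \<subseteq> carrier G" by (rule EE_carrier)
    have "mem k e 0 False False" by (simp add: mem_FF)
    then show "EE e k \<noteq> {}" unfolding EE_def by blast
  next
    fix h assume "h \<in> EE e k"
    then obtain i a b where h: "h = gg i a b" and mi: "mem k e i a b" unfolding EE_def by blast
    have "mem k e (- i + MM * (of_bool a * of_bool b)) a b = mem k e (- i) a b"
      by (rule mem_shift[OF dvd_mult2[OF dvd_MM[OF em]]])
    then have "mem k e (- i + MM * (of_bool a * of_bool b)) a b" using mem_inv0[OF mi] by simp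
    then show "inv h \<in> EE e k" unfolding h gg_inv EE_def by blast
  next
    fix h h' assume "h \<in> EE e k" "h' \<in> EE e k"
    then obtain i a b j c d where h: "h = gg i a b" and mi: "mem k e i a b"
      and h': "h' = gg j c d" and mj: "mem k e j c d" unfolding EE_def by blast
    have "mem k e (i + j + MM * (of_bool b * of_bool c)) (a \<noteq> c) (b \<noteq> d) = mem k e (i + j) (a \<noteq> c) (b \<noteq> d)"
      by (rule mem_shift[OF dvd_mult2[OF dvd_MM[OF em]]])
    then have "mem k e (i + j + MM * (of_bool b * of_bool c)) (a \<noteq> c) (b \<noteq> d)"
      using mem_mult0[OF k10 e1 mi mj] by simp
    then show "h \<otimes> h' \<in> EE e k" unfolding h h' gg_mult EE_def by blast
  qed
qed

lemma conj_gg: "gg j c d \<otimes> gg i a b \<otimes> inv (gg j c d) =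
   gg (i + MM * (of_bool d * of_bool a + of_bool c * of_bool d + of_bool (d \<noteq> b) * of_bool c)) a b"
  by (cases a; cases b; cases c; cases d) (simp_all add: gg_mult gg_inv algebra_simps)

lemma EE_normal: assumes v: "valid m e k" shows "EE e k \<lhd> G"
proof -
  have em: "e \<le> m - 1" using v unfolding valid_def by auto
  show ?thesis unfolding normal_inv_iff
  proof (intro conjI ballI)
    show "subgroup (EE e k) G" by (rule EE_subgroup[OF v])
  next
    fix g h assume g: "g \<in> carrier G" and h: "h \<in> EE e k"
    obtain j c d where gj: "g = gg j c d" using g carrier_gg by auto
    obtain i a b where hi: "h = gg i a b" and mi: "mem k e i a b" using h unfolding EE_def by blast
    let ?X = "of_bool d * of_bool a + of_bool c * of_bool d + of_bool (d \<noteq> b) * of_bool c :: int"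
    have "mem k e (i + MM * ?X) a b = mem k e i a b"
      by (rule mem_shift[OF dvd_mult2[OF dvd_MM[OF em]]])
    then have "mem k e (i + MM * ?X) a b" using mi by simp
    then show "g \<otimes> h \<otimes> inv g \<in> EE e k"
      unfolding gj hi conj_gg EE_def by blast
  qed
qed

lemma gg_ne_one: assumes "e \<le> m - 1" shows "gg (2 ^ e) False False \<noteq> \<one>"
proof
  assume "gg (2 ^ e) False False = \<one>"
  then have "gg (2 ^ e) False False = gg 0 False False" using gg_one by simp
  then have "(2::int) ^ e mod NN = 0" using gg_eq by simp
  moreover have "(2::int) ^ e < NN" unfolding NN_def using assms m2 by (simp add: power_strict_increasing)
  ultimately show False by simp
qed

lemma EE_nontriv: assumes v: "valid m e k" shows "EE e k \<noteq> {\<one>}"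
proof
  have em: "e \<le> m - 1" using v unfolding valid_def by auto
  assume E: "EE e k = {\<one>}"
  have "mem k e (2 ^ e) False False" by (simp add: mem_FF)
  then have "gg (2 ^ e) False False \<in> EE e k" unfolding EE_def by blast
  then show False using E gg_ne_one[OF em] by simp
qed

lemma EE_inj: assumes "valid m e k" "valid m e' k'" "EE e k = EE e' k'" shows "e = e' \<and> k = k'"
proof (rule mem_inj[OF assms(1,2)])
  have "e \<le> m" "e' \<le> m" using assms unfolding valid_def by auto
  then show "mem k e i a b = mem k' e' i a b" for i a b
    using memE[of e i a b k] memE[of e' i a b k'] assms(3) by simp
qed


lemma normal_classify:
  assumes N: "H \<lhd> G" and nt: "H \<noteq> {\<one>}"
  shows "\<exists>e k. valid m e k \<and> H = EE e k"
proof -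
  have sg: "subgroup H G" using N by (simp add: normal_imp_subgroup)
  define q where "q = (\<lambda>i a b. gg i a b \<in> H)"
  have q0: "q 0 False False" unfolding q_def gg_one using sg subgroup.one_closed by blast
  have qmul: "q (i + j + (2::int) ^ (m - 1) * (of_bool b * of_bool c)) (a \<noteq> c) (b \<noteq> d)"
    if "q i a b" "q j c d" for i a b j c d
  proof -
    have "gg i a b \<otimes> gg j c d \<in> H" using that subgroup.m_closed[OF sg] unfolding q_def by blast
    then show ?thesis unfolding q_def gg_mult MM_def .
  qed
  have qinv: "q (- i + (2::int) ^ (m - 1) * (of_bool a * of_bool b)) a b" if "q i a b" for i a b
  proof -
    have "inv (gg i a b) \<in> H" using that subgroup.m_inv_closed[OF sg] unfolding q_def by blast
    then show ?thesis unfolding q_def gg_inv MM_def .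
  qed
  have qN: "q ((2::int) ^ m) False False"
    using q0 gg_period[where i=0 and k=1 and a=False and b=False] unfolding q_def NN_def by simp
  have conjH: "g \<otimes> h \<otimes> inv g \<in> H" if "g \<in> carrier G" "h \<in> H" for g h
    using N that unfolding normal_inv_iff by blast
  have yg: "y = gg 0 False True" and xg: "x = gg 0 True False" unfolding gg_def using xc yc by auto
  have qcx: "q (i + (2::int) ^ (m - 1)) True b" if "q i True b" for i b
  proof -
    have "gg 0 False True \<otimes> gg i True b \<otimes> inv (gg 0 False True) = gg (i + MM) True b"
      by (cases b) (simp_all add: conj_gg)
    then show ?thesis using conjH[OF gg_closed, of "gg i True b" 0 False True] that
      unfolding q_def MM_def by simp
  qed
  have qcy: "q (i + (2::int) ^ (m - 1)) a True" if "q i a True" for i a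
  proof -
    have "gg 0 True False \<otimes> gg i a True \<otimes> inv (gg 0 True False) = gg (i + MM) a True"
      by (cases a) (simp_all add: conj_gg)
    then show ?thesis using conjH[OF gg_closed, of "gg i a True" 0 True False] that
      unfolding q_def MM_def by simp
  qed
  have nontriv: "\<exists>i a b. q i a b \<and> \<not> ((2::int) ^ m dvd i \<and> \<not> a \<and> \<not> b)"
  proof -
    have one: "\<one> \<in> H" using sg subgroup.one_closed by blast
    have "\<exists>h\<in>H. h \<noteq> \<one>"
    proof (rule ccontr)
      assume "\<not> (\<exists>h\<in>H. h \<noteq> \<one>)"
      then have "H \<subseteq> {\<one>}" by blast
      then have "H = {\<one>}" using one by blast
      then show False using nt by simp
    qed
    then obtain h where hH: "h \<in> H" and h1: "h \<noteq> \<one>" by blast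
    have "h \<in> carrier G" by (rule subgroup.mem_carrier[OF sg hH])
    then have "h \<in> range (\<lambda>(i,a,b). gg i a b)" unfolding carrier_gg .
    then obtain i a b where hg: "h = gg i a b" by auto
    have "\<not> ((2::int) ^ m dvd i \<and> \<not> a \<and> \<not> b)"
    proof
      assume as: "(2::int) ^ m dvd i \<and> \<not> a \<and> \<not> b"
      then have "i mod NN = 0 mod NN" unfolding NN_def by simp
      then have "gg i a b = gg 0 False False" using as gg_eq[of i a b 0 False False] by simp
      then show False using h1 hg gg_one by simp
    qed
    then show ?thesis using hH hg unfolding q_def by blast
  qed
  obtain e k where v: "(k \<le> 4 \<and> e \<le> m - 1) \<or> (5 \<le> k \<and> k \<le> 10 \<and> 1 \<le> e \<and> e \<le> m - 1)"
    and qm: "\<forall>i a b. q i a b = mem k e i a b"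
    using classify[OF m2 q0 qmul qinv qN qcx qcy nontriv] by blast
  have "H = EE e k"
  proof
    show "H \<subseteq> EE e k"
    proof
      fix h assume hH: "h \<in> H"
      then have "h \<in> carrier G" by (rule subgroup.mem_carrier[OF sg])
      then have "h \<in> range (\<lambda>(i,a,b). gg i a b)" unfolding carrier_gg .
      then obtain i a b where hg: "h = gg i a b" by auto
      then have "mem k e i a b" using qm hH unfolding q_def by blast
      then show "h \<in> EE e k" unfolding hg EE_def by blast
    qed
  next
    show "EE e k \<subseteq> H" unfolding EE_def using qm unfolding q_def by blast
  qed
  then show ?thesis using v unfolding valid_def by blast
qed


lemma tpow_gg: "t [^] (n::nat) = gg (int n) False False" unfolding gg_def using tc by (simp add: int_pow_int)
lemma x_gg: "x = gg 0 True False" unfolding gg_def using xc by simp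
lemma y_gg: "y = gg 0 False True" unfolding gg_def using yc by simp

lemma gen_EE:
  assumes v: "valid m e k" and S: "S \<subseteq> EE e k"
    and base: "gg (2 ^ e) False False \<in> generate G S"
    and fib: "\<And>a b. inP k a b \<Longrightarrow> \<exists>j. mem k e j a b \<and> gg j a b \<in> generate G S"
  shows "generate G S = EE e k"
proof
  have Sc: "S \<subseteq> carrier G" using S EE_carrier by blast
  have sgS: "subgroup (generate G S) G" by (rule generate_is_subgroup[OF Sc])
  show "generate G S \<subseteq> EE e k" by (rule generate_subgroup_incl[OF S EE_subgroup[OF v]])
  show "EE e k \<subseteq> generate G S"
  proof
    fix h assume "h \<in> EE e k"
    then obtain i a b where hg: "h = gg i a b" and mi: "mem k e i a b" unfolding EE_def by blast
    have "inP k a b" using mi unfolding mem_def by simp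
    then obtain j where mj: "mem k e j a b" and gj: "gg j a b \<in> generate G S" using fib by blast
    have "(2::int) ^ e dvd i - j" by (rule mem_diff[OF mi mj])
    then obtain l where l: "i - j = 2 ^ e * l" by (auto elim: dvdE)
    have "gg (2 ^ e) False False [^] l \<in> generate G S" by (rule subgroup_int_pow_closed[OF sgS base])
    moreover have "gg (2 ^ e) False False [^] l = gg (i - j) False False"
      unfolding gg_def l using tc by (simp add: int_pow_pow)
    ultimately have "gg (i - j) False False \<in> generate G S" by simp
    then have "gg (i - j) False False \<otimes> gg j a b \<in> generate G S"
      using gj subgroup.m_closed[OF sgS] by blast
    then show "h \<in> generate G S" unfolding hg gg_mult by simp
  qed
qed


lemma EE_I: "mem k e i a b \<Longrightarrow> gg i a b \<in> EE e k" unfolding EE_def by blast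

lemma gen_EE4:
  assumes v: "valid m e k" and S: "S \<subseteq> EE e k"
    and base: "gg (2 ^ e) False False \<in> generate G S"
    and w1: "inP k True False \<Longrightarrow> mem k e ja True False \<and> gg ja True False \<in> generate G S"
    and w2: "inP k False True \<Longrightarrow> mem k e jb False True \<and> gg jb False True \<in> generate G S"
    and w3: "inP k True True \<Longrightarrow> mem k e jc True True \<and> gg jc True True \<in> generate G S"
  shows "generate G S = EE e k"
proof (rule gen_EE[OF v S base])
  fix a b assume p: "inP k a b"
  have w0: "mem k e 0 False False \<and> gg 0 False False \<in> generate G S"
    using generate.one[of G S] gg_one by (simp add: mem_FF)
  have e0: "\<exists>j. mem k e j False False \<and> gg j False False \<in> generate G S" using w0 by blast
  have e1: "inP k True False \<Longrightarrow> \<exists>j. mem k e j True False \<and> gg j True False \<in> generate G S" using w1 by blast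
  have e2: "inP k False True \<Longrightarrow> \<exists>j. mem k e j False True \<and> gg j False True \<in> generate G S" using w2 by blast
  have e3: "inP k True True \<Longrightarrow> \<exists>j. mem k e j True True \<and> gg j True True \<in> generate G S" using w3 by blast
  show "\<exists>j. mem k e j a b \<and> gg j a b \<in> generate G S"
    using p e0 e1 e2 e3 by (cases a; cases b) auto
qed

lemma r2: "gg i False False \<otimes> x = gg i True False" unfolding gg_def using xc tc by simp
lemma r3: "gg i False False \<otimes> y = gg i False True" unfolding gg_def using yc tc by simp
lemma r4: "gg i True False \<otimes> y = gg i True True" unfolding gg_def using xc yc tc by simp
lemma r5: "x \<otimes> y = gg 0 True True" unfolding gg_def using xc yc tc by simp

lemma sq_gen: "gg i a b \<in> generate G S \<Longrightarrow> gg i a b \<otimes> gg i a b \<in> generate G S"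
  by (rule generate.eng)

lemmas gsimps = tpow_gg r2 r3 r4 r5 x_gg[symmetric] y_gg[symmetric]

lemma gen0: assumes "c < m" shows "generate G {t [^] ((2::nat) ^ c)} = EE c 0"
proof -
  have v: "valid m c 0" using assms unfolding valid_def by simp
  have S: "{t [^] ((2::nat) ^ c)} = {gg (2 ^ c) False False}" by (simp add: gsimps)
  show ?thesis unfolding S
    by (rule gen_EE4[OF v]) (auto simp: mem_FF inP_def intro: generate.incl EE_I)
qed

lemma gen1: assumes "a < m" shows "generate G {t [^] ((2::nat) ^ a), x} = EE a 1"
proof -
  have v: "valid m a 1" using assms unfolding valid_def by simp
  have S: "{t [^] ((2::nat) ^ a), x} = {gg (2 ^ a) False False, gg 0 True False}" by (simp add: gsimps)
  show ?thesis unfolding S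
    by (rule gen_EE4[OF v, where ja=0]) (auto simp: mem_def inP_def tw_def intro: generate.incl EE_I)
qed

lemma gen2: assumes "a < m" shows "generate G {t [^] ((2::nat) ^ a), y} = EE a 2"
proof -
  have v: "valid m a 2" using assms unfolding valid_def by simp
  have S: "{t [^] ((2::nat) ^ a), y} = {gg (2 ^ a) False False, gg 0 False True}" by (simp add: gsimps)
  show ?thesis unfolding S
    by (rule gen_EE4[OF v, where jb=0]) (auto simp: mem_def inP_def tw_def intro: generate.incl EE_I)
qed

lemma gen3: assumes "a < m" shows "generate G {t [^] ((2::nat) ^ a), x \<otimes> y} = EE a 3"
proof -
  have v: "valid m a 3" using assms unfolding valid_def by simp
  have S: "{t [^] ((2::nat) ^ a), x \<otimes> y} = {gg (2 ^ a) False False, gg 0 True True}" by (simp add: gsimps)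
  show ?thesis unfolding S
    by (rule gen_EE4[OF v, where jc=0]) (auto simp: mem_def inP_def tw_def intro: generate.incl EE_I)
qed

lemma gen4: assumes "a < m" shows "generate G {t [^] ((2::nat) ^ a), x, y} = EE a 4"
proof -
  have v: "valid m a 4" using assms unfolding valid_def by simp
  let ?S = "{gg (2 ^ a) False False, gg 0 True False, gg 0 False True}"
  have S: "{t [^] ((2::nat) ^ a), x, y} = ?S" by (simp add: gsimps)
  have gx: "gg 0 True False \<in> generate G ?S" by (rule generate.incl) simp
  have gy: "gg 0 False True \<in> generate G ?S" by (rule generate.incl) simp
  have "gg 0 True True \<in> generate G ?S" using generate.eng[OF gx gy] by (simp add: gg_mult)
  then show ?thesis unfolding S
    by (intro gen_EE4[OF v, where ja=0 and jb=0 and jc=0]) (auto simp: mem_def inP_def tw_def intro: generate.incl EE_I)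
qed

lemma gen5: assumes "b < m - 1" shows "generate G {t [^] ((2::nat) ^ b) \<otimes> x} = EE (Suc b) 5"
proof -
  have v: "valid m (Suc b) 5" using assms unfolding valid_def by simp
  let ?S = "{gg (2 ^ b) True False}"
  have S: "{t [^] ((2::nat) ^ b) \<otimes> x} = ?S" by (simp add: gsimps)
  have g1: "gg (2 ^ b) True False \<in> generate G ?S" by (rule generate.incl) simp
  have base: "gg (2 ^ Suc b) False False \<in> generate G ?S" using generate.eng[OF g1 g1] by (simp add: gg_mult)
  show ?thesis unfolding S
    by (rule gen_EE4[OF v _ base, where ja="2 ^ b"]) (auto simp: mem_def inP_def tw_def intro: generate.incl EE_I)
qed

lemma gen6: assumes "b < m - 1" shows "generate G {t [^] ((2::nat) ^ b) \<otimes> y} = EE (Suc b) 6"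
proof -
  have v: "valid m (Suc b) 6" using assms unfolding valid_def by simp
  let ?S = "{gg (2 ^ b) False True}"
  have S: "{t [^] ((2::nat) ^ b) \<otimes> y} = ?S" by (simp add: gsimps)
  have g1: "gg (2 ^ b) False True \<in> generate G ?S" by (rule generate.incl) simp
  have base: "gg (2 ^ Suc b) False False \<in> generate G ?S" using generate.eng[OF g1 g1] by (simp add: gg_mult)
  show ?thesis unfolding S
    by (rule gen_EE4[OF v _ base, where jb="2 ^ b"]) (auto simp: mem_def inP_def tw_def intro: generate.incl EE_I)
qed

lemma zmem: assumes "b < m - 1" shows "mem k (Suc b) (2 ^ (m - 1)) False False"
  unfolding mem_FF using assms by (intro le_imp_power_dvd) simp

lemma zE: "b < m - 1 \<Longrightarrow> gg (2 ^ (m - 1)) False False \<in> EE (Suc b) k"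
  by (rule EE_I[OF zmem])

lemma gen7: assumes "b < m - 1"
  shows "generate G {t [^] ((2::nat) ^ (m - 1)), t [^] ((2::nat) ^ b) \<otimes> x \<otimes> y} = EE (Suc b) 7"
proof -
  have v: "valid m (Suc b) 7" using assms unfolding valid_def by simp
  let ?S = "{gg (2 ^ (m - 1)) False False, gg (2 ^ b) True True}"
  have S: "{t [^] ((2::nat) ^ (m - 1)), t [^] ((2::nat) ^ b) \<otimes> x \<otimes> y} = ?S" by (simp add: gsimps)
  have gz: "gg (2 ^ (m - 1)) False False \<in> ?S" by simp
  have g1: "gg (2 ^ b) True True \<in> generate G ?S" by (rule generate.incl) simp
  have "gg (2 ^ b) True True \<otimes> gg (2 ^ b) True True \<otimes> inv (gg (2 ^ (m - 1)) False False) = gg (2 ^ Suc b) False False"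
    by (simp add: gg_mult gg_inv MM_def)
  then have base: "gg (2 ^ Suc b) False False \<in> generate G ?S"
    using generate.eng[OF generate.eng[OF g1 g1] generate.inv[OF gz]] by simp
  show ?thesis unfolding S using zE[OF assms]
    by (intro gen_EE4[OF v _ base, where jc="2 ^ b"]) (auto simp: mem_def inP_def tw_def intro: generate.incl EE_I)
qed

lemma gen8: assumes "b < m - 1"
  shows "generate G {t [^] ((2::nat) ^ (m - 1)), x, t [^] ((2::nat) ^ b) \<otimes> y} = EE (Suc b) 8"
proof -
  have v: "valid m (Suc b) 8" using assms unfolding valid_def by simp
  let ?S = "{gg (2 ^ (m - 1)) False False, gg 0 True False, gg (2 ^ b) False True}"
  have S: "{t [^] ((2::nat) ^ (m - 1)), x, t [^] ((2::nat) ^ b) \<otimes> y} = ?S" by (simp add: gsimps)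
  have gx: "gg 0 True False \<in> generate G ?S" by (rule generate.incl) simp
  have g1: "gg (2 ^ b) False True \<in> generate G ?S" by (rule generate.incl) simp
  have base: "gg (2 ^ Suc b) False False \<in> generate G ?S" using generate.eng[OF g1 g1] by (simp add: gg_mult)
  have g3: "gg (2 ^ b) True True \<in> generate G ?S" using generate.eng[OF gx g1] by (simp add: gg_mult)
  show ?thesis unfolding S using zE[OF assms] g3
    by (intro gen_EE4[OF v _ base, where ja=0 and jb="2 ^ b" and jc="2 ^ b"]) (auto simp: mem_def inP_def tw_def intro: generate.incl EE_I)
qed

lemma gen9: assumes "b < m - 1"
  shows "generate G {t [^] ((2::nat) ^ (m - 1)), t [^] ((2::nat) ^ b) \<otimes> x, y} = EE (Suc b) 9"
proof -
  have v: "valid m (Suc b) 9" using assms unfolding valid_def by simp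
  let ?S = "{gg (2 ^ (m - 1)) False False, gg (2 ^ b) True False, gg 0 False True}"
  have S: "{t [^] ((2::nat) ^ (m - 1)), t [^] ((2::nat) ^ b) \<otimes> x, y} = ?S" by (simp add: gsimps)
  have gy: "gg 0 False True \<in> generate G ?S" by (rule generate.incl) simp
  have g1: "gg (2 ^ b) True False \<in> generate G ?S" by (rule generate.incl) simp
  have base: "gg (2 ^ Suc b) False False \<in> generate G ?S" using generate.eng[OF g1 g1] by (simp add: gg_mult)
  have g3: "gg (2 ^ b) True True \<in> generate G ?S" using generate.eng[OF g1 gy] by (simp add: gg_mult)
  show ?thesis unfolding S using zE[OF assms] g3
    by (intro gen_EE4[OF v _ base, where ja="2 ^ b" and jb=0 and jc="2 ^ b"]) (auto simp: mem_def inP_def tw_def intro: generate.incl EE_I)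
qed

lemma gen10: assumes "b < m - 1"
  shows "generate G {t [^] ((2::nat) ^ b) \<otimes> x, t [^] ((2::nat) ^ b) \<otimes> y} = EE (Suc b) 10"
proof -
  have v: "valid m (Suc b) 10" using assms unfolding valid_def by simp
  let ?S = "{gg (2 ^ b) True False, gg (2 ^ b) False True}"
  have S: "{t [^] ((2::nat) ^ b) \<otimes> x, t [^] ((2::nat) ^ b) \<otimes> y} = ?S" by (simp add: gsimps)
  have g1: "gg (2 ^ b) True False \<in> generate G ?S" by (rule generate.incl) simp
  have g2: "gg (2 ^ b) False True \<in> generate G ?S" by (rule generate.incl) simp
  have base: "gg (2 ^ Suc b) False False \<in> generate G ?S" using generate.eng[OF g1 g1] by (simp add: gg_mult)
  have g3: "gg (2 ^ Suc b) True True \<in> generate G ?S" using generate.eng[OF g1 g2] by (simp add: gg_mult)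
  show ?thesis unfolding S using g3
    by (intro gen_EE4[OF v _ base, where ja="2 ^ b" and jb="2 ^ b" and jc="2 ^ Suc b"]) (auto simp: mem_def inP_def tw_def intro: generate.incl EE_I)
qed


lemma D1_list: "D1_normal_list G m x y t = map (\<lambda>(e,k). EE e k) (params m)"
proof -
  have L: "D1_normal_list G m x y t =
     concat (map (\<lambda>a. [generate G {t [^] ((2::nat) ^ a), x}, generate G {t [^] ((2::nat) ^ a), y},
                       generate G {t [^] ((2::nat) ^ a), x \<otimes> y}, generate G {t [^] ((2::nat) ^ a), x, y}]) [0..<m])
     @ concat (map (\<lambda>b. [generate G {t [^] ((2::nat) ^ b) \<otimes> x}, generate G {t [^] ((2::nat) ^ b) \<otimes> y},
                       generate G {t [^] ((2::nat) ^ (m - 1)), t [^] ((2::nat) ^ b) \<otimes> x \<otimes> y},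
                       generate G {t [^] ((2::nat) ^ (m - 1)), x, t [^] ((2::nat) ^ b) \<otimes> y},
                       generate G {t [^] ((2::nat) ^ (m - 1)), t [^] ((2::nat) ^ b) \<otimes> x, y},
                       generate G {t [^] ((2::nat) ^ b) \<otimes> x, t [^] ((2::nat) ^ b) \<otimes> y}]) [0..<m - 1])
     @ map (\<lambda>c. generate G {t [^] ((2::nat) ^ c)}) [0..<m]"
    by (unfold D1_normal_list_def Let_def) (rule refl)
  have R: "map (\<lambda>(e,k). EE e k) (params m) =
     concat (map (\<lambda>a. [EE a 1, EE a 2, EE a 3, EE a 4]) [0..<m])
     @ concat (map (\<lambda>b. [EE (Suc b) 5, EE (Suc b) 6, EE (Suc b) 7, EE (Suc b) 8, EE (Suc b) 9, EE (Suc b) 10]) [0..<m - 1])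
     @ map (\<lambda>c. EE c 0) [0..<m]"
    unfolding params_def by (simp add: map_concat comp_def)
  have A: "map (\<lambda>a. [generate G {t [^] ((2::nat) ^ a), x}, generate G {t [^] ((2::nat) ^ a), y},
                       generate G {t [^] ((2::nat) ^ a), x \<otimes> y}, generate G {t [^] ((2::nat) ^ a), x, y}]) [0..<m]
        = map (\<lambda>a. [EE a 1, EE a 2, EE a 3, EE a 4]) [0..<m]"
  proof (rule map_cong[OF refl])
    fix a assume "a \<in> set [0..<m]"
    then have h: "a < m" by simp
    show "[generate G {t [^] ((2::nat) ^ a), x}, generate G {t [^] ((2::nat) ^ a), y},
           generate G {t [^] ((2::nat) ^ a), x \<otimes> y}, generate G {t [^] ((2::nat) ^ a), x, y}]
          = [EE a 1, EE a 2, EE a 3, EE a 4]"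
      by (simp only: gen1[OF h] gen2[OF h] gen3[OF h] gen4[OF h])
  qed
  have B: "map (\<lambda>b. [generate G {t [^] ((2::nat) ^ b) \<otimes> x}, generate G {t [^] ((2::nat) ^ b) \<otimes> y},
                       generate G {t [^] ((2::nat) ^ (m - 1)), t [^] ((2::nat) ^ b) \<otimes> x \<otimes> y},
                       generate G {t [^] ((2::nat) ^ (m - 1)), x, t [^] ((2::nat) ^ b) \<otimes> y},
                       generate G {t [^] ((2::nat) ^ (m - 1)), t [^] ((2::nat) ^ b) \<otimes> x, y},
                       generate G {t [^] ((2::nat) ^ b) \<otimes> x, t [^] ((2::nat) ^ b) \<otimes> y}]) [0..<m - 1]
        = map (\<lambda>b. [EE (Suc b) 5, EE (Suc b) 6, EE (Suc b) 7, EE (Suc b) 8, EE (Suc b) 9, EE (Suc b) 10]) [0..<m - 1]"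
  proof (rule map_cong[OF refl])
    fix b assume "b \<in> set [0..<m - 1]"
    then have h: "b < m - 1" by simp
    show "[generate G {t [^] ((2::nat) ^ b) \<otimes> x}, generate G {t [^] ((2::nat) ^ b) \<otimes> y},
           generate G {t [^] ((2::nat) ^ (m - 1)), t [^] ((2::nat) ^ b) \<otimes> x \<otimes> y},
           generate G {t [^] ((2::nat) ^ (m - 1)), x, t [^] ((2::nat) ^ b) \<otimes> y},
           generate G {t [^] ((2::nat) ^ (m - 1)), t [^] ((2::nat) ^ b) \<otimes> x, y},
           generate G {t [^] ((2::nat) ^ b) \<otimes> x, t [^] ((2::nat) ^ b) \<otimes> y}]
          = [EE (Suc b) 5, EE (Suc b) 6, EE (Suc b) 7, EE (Suc b) 8, EE (Suc b) 9, EE (Suc b) 10]"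
      by (simp only: gen5[OF h] gen6[OF h] gen7[OF h] gen8[OF h] gen9[OF h] gen10[OF h])
  qed
  have C: "map (\<lambda>c. generate G {t [^] ((2::nat) ^ c)}) [0..<m] = map (\<lambda>c. EE c 0) [0..<m]"
  proof (rule map_cong[OF refl])
    fix c assume "c \<in> set [0..<m]"
    then have h: "c < m" by simp
    show "generate G {t [^] ((2::nat) ^ c)} = EE c 0" by (rule gen0[OF h])
  qed
  show ?thesis unfolding L R A B C ..
qed

lemma main: "distinct (D1_normal_list G m x y t) \<and>
         set (D1_normal_list G m x y t) = {H. normal H G \<and> H \<noteq> {\<one>}}"
proof
  have sp: "set (params m) = {(e,k). valid m e k}" by (rule set_params[OF m2])
  have inj: "inj_on (\<lambda>(e,k). EE e k) (set (params m))"
    unfolding sp inj_on_def using EE_inj by auto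
  show "distinct (D1_normal_list G m x y t)"
    unfolding D1_list distinct_map using distinct_params inj by blast
  show "set (D1_normal_list G m x y t) = {H. normal H G \<and> H \<noteq> {\<one>}}"
  proof
    show "set (D1_normal_list G m x y t) \<subseteq> {H. normal H G \<and> H \<noteq> {\<one>}}"
      unfolding D1_list set_map sp using EE_normal EE_nontriv by auto
    show "{H. normal H G \<and> H \<noteq> {\<one>}} \<subseteq> set (D1_normal_list G m x y t)"
    proof
      fix H assume "H \<in> {H. normal H G \<and> H \<noteq> {\<one>}}"
      then obtain e k where "valid m e k" "H = EE e k" using normal_classify by blast
      then show "H \<in> set (D1_normal_list G m x y t)" unfolding D1_list set_map sp by auto
    qed
  qed
qed

end

theorem lemma4:
  fixes G (structure) and x y t :: 'a and m :: nat
  assumes "m \<ge> 2"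
    and "group G"
    and "x \<in> carrier G" "y \<in> carrier G" "t \<in> carrier G"
    and "x [^] (2::nat) = \<one>" "y [^] (2::nat) = \<one>" "t [^] ((2::nat) ^ m) = \<one>"
    and "inv y \<otimes> inv x \<otimes> y \<otimes> x \<otimes> t [^] ((2::nat) ^ (m - 1)) = \<one>"
    and "\<forall>g \<in> carrier G. t \<otimes> g = g \<otimes> t"
    and "generate G {x, y, t} = carrier G"
    and "order G = 2 ^ (m + 2)"
  shows "distinct (D1_normal_list G m x y t) \<and>
         set (D1_normal_list G m x y t) = {H. normal H G \<and> H \<noteq> {\<one>}}"
proof -
  interpret d1 G x y t m
    by (rule d1.intro[OF assms(2)], unfold_locales) (use assms in auto)
  show ?thesis by (rule main)
qed

end
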